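(* Let $G$ be a knot grid diagram and $K$ the oriented planar knot diagram it determines. Then $$M(\mathbf x^+(G))=-\mathrm{writhe}(K)-\#\{\text{downward-oriented cusps}\}+1,\qquad M(\mathbf x^-(G))=-\mathrm{writhe}(K)-\#\{\text{upward-oriented cusps}\}+1,$$ where the cusps are those of the front projection of the associated Legendrian knot $\vec{\mathcal K}(G)$.
   Context: A grid diagram $G$ of grid number $n$ is an $n\times n$ array of unit squares in the plane with lower-left corner at the origin, some marked $X$ and some $O$, with exactly one $X$ and one $O$ (in different squares) in every row and column. Drawing horizontal segments from $O$ to $X$ in each row and vertical segments from $X$ to $O$ in each column, vertical over horizontal at crossings, gives an oriented planar diagram $K$; $G$ is a knot grid diagram if $K$ is a knot. $\mathrm{writhe}(K)$ is the number of positive minus the number of negative crossings of $K$. The oriented Legendrian knot $\vec{\mathcal K}(G)$ has front projection obtained from $K$ by smoothing northwest and southeast corners, turning southwest and northeast corners into cusps, and rotating $45^\circ$ clockwise; a cusp is downward- (resp. upward-) oriented if the front is traversed downward (resp. upward) through it. Write $\mathbb O$ for the set of centers of the $O$-squares. $\mathbf S(G)$ is the set of $n$-tuples of integer points in $[0,n)^2$ with exactly one point on each line $y=k$ and each line $x=k$, $0\le k<n$. For finite sets $A,B$ let $\mathcal I(A,B)=\#\{(a,b)\in A\times B:a_1<b_1,a_2<b_2\}$, $\mathcal J(A,B)=\frac12(\mathcal I(A,B)+\mathcal I(B,A))$, extended bilinearly; $M(\mathbf x)=\mathcal J(\mathbf x-\mathbb O,\mathbf x-\mathbb O)+1$ (independent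 of the choice of fundamental domain for the torus). $\mathbf x^+(G)$ (resp. $\mathbf x^-(G)$) is the generator whose points are the upper right (resp. lower left) corners of the squares marked $X$. *)

theory Defs
  imports Main Complex_Main
begin

(* A grid diagram of grid number n is encoded by two functions on columns:
   column i (0 <= i < n) has its X in the square [i,i+1]x[sX i, sX i+1]
   and its O in the square [i,i+1]x[sO i, sO i+1]. *)

definition grid_diagram :: "nat \<Rightarrow> (nat \<Rightarrow> nat) \<Rightarrow> (nat \<Rightarrow> nat) \<Rightarrow> bool" where
  "grid_diagram n sX sO \<longleftrightarrow>
     bij_betw sX {..<n} {..<n} \<and> bij_betw sO {..<n} {..<n} \<and> (\<forall>i<n. sX i \<noteq> sO i)"

definition xcol :: "nat \<Rightarrow> (nat \<Rightarrow> nat) \<Rightarrow> nat \<Rightarrow> nat" where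
  "xcol n sX r = inv_into {..<n} sX r"

definition ocol :: "nat \<Rightarrow> (nat \<Rightarrow> nat) \<Rightarrow> nat \<Rightarrow> nat" where
  "ocol n sO r = inv_into {..<n} sO r"

(* following the knot: from the X in column i go vertically to the O in column i,
   then horizontally to the X in that row *)
definition grid_next :: "nat \<Rightarrow> (nat \<Rightarrow> nat) \<Rightarrow> (nat \<Rightarrow> nat) \<Rightarrow> nat \<Rightarrow> nat" where
  "grid_next n sX sO i = xcol n sX (sO i)"

definition knot_grid :: "nat \<Rightarrow> (nat \<Rightarrow> nat) \<Rightarrow> (nat \<Rightarrow> nat) \<Rightarrow> bool" where
  "knot_grid n sX sO \<longleftrightarrow> grid_diagram n sX sO \<and>
     (\<forall>i<n. \<forall>j<n. \<exists>k. (grid_next n sX sO ^^ k) i = j)"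

(* vertical segment of column i crosses horizontal segment of row j *)
definition grid_crossing :: "nat \<Rightarrow> (nat \<Rightarrow> nat) \<Rightarrow> (nat \<Rightarrow> nat) \<Rightarrow> nat \<Rightarrow> nat \<Rightarrow> bool" where
  "grid_crossing n sX sO i j \<longleftrightarrow>
     min (sX i) (sO i) < j \<and> j < max (sX i) (sO i) \<and>
     min (ocol n sO j) (xcol n sX j) < i \<and> i < max (ocol n sO j) (xcol n sX j)"

(* sign of such a crossing (vertical strand, oriented X to O, passes over the
   horizontal strand, oriented O to X): positive iff cross(over, under) > 0 *)
definition crossing_sign :: "nat \<Rightarrow> (nat \<Rightarrow> nat) \<Rightarrow> (nat \<Rightarrow> nat) \<Rightarrow> nat \<Rightarrow> nat \<Rightarrow> int" where
  "crossing_sign n sX sO i j =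
     - ((if sX i < sO i then 1 else -1) * (if ocol n sO j < xcol n sX j then 1 else -1))"

definition grid_writhe :: "nat \<Rightarrow> (nat \<Rightarrow> nat) \<Rightarrow> (nat \<Rightarrow> nat) \<Rightarrow> int" where
  "grid_writhe n sX sO =
     (\<Sum>i<n. \<Sum>j<n. if grid_crossing n sX sO i j then crossing_sign n sX sO i j else 0)"

(* Corners of K sit at the markings.  At the X of column i (row r = sX i) the
   horizontal segment leaves towards ocol r and the vertical one towards sO i;
   at the O of column i (row r = sO i) the horizontal segment leaves towards
   xcol r and the vertical one towards sX i.  Southwest corners (segments go
   east and north) become left cusps, northeast corners (west and south) become
   right cusps.  The knot passes through an X along horizontal-then-vertical
   and through an O along vertical-then-horizontal; after rotating 45 degrees
   clockwise this gives the following orientations. *)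

definition down_cusps :: "nat \<Rightarrow> (nat \<Rightarrow> nat) \<Rightarrow> (nat \<Rightarrow> nat) \<Rightarrow> nat" where
  "down_cusps n sX sO =
     card {i. i < n \<and> ocol n sO (sX i) < i \<and> sO i < sX i}   \<comment> \<open>NE corners at X\<close>
   + card {i. i < n \<and> i < xcol n sX (sO i) \<and> sO i < sX i}  \<comment> \<open>SW corners at O\<close>"

definition up_cusps :: "nat \<Rightarrow> (nat \<Rightarrow> nat) \<Rightarrow> (nat \<Rightarrow> nat) \<Rightarrow> nat" where
  "up_cusps n sX sO =
     card {i. i < n \<and> i < ocol n sO (sX i) \<and> sX i < sO i}   \<comment> \<open>SW corners at X\<close>
   + card {i. i < n \<and> xcol n sX (sO i) < i \<and> sX i < sO i}  \<comment> \<open>NE corners at O\<close>"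

definition I_pairs :: "(real \<times> real) set \<Rightarrow> (real \<times> real) set \<Rightarrow> nat" where
  "I_pairs A B = card {(a, b). a \<in> A \<and> b \<in> B \<and> fst a < fst b \<and> snd a < snd b}"

definition J_pairs :: "(real \<times> real) set \<Rightarrow> (real \<times> real) set \<Rightarrow> real" where
  "J_pairs A B = (real (I_pairs A B) + real (I_pairs B A)) / 2"

definition O_centers :: "nat \<Rightarrow> (nat \<Rightarrow> nat) \<Rightarrow> (real \<times> real) set" where
  "O_centers n sO = {(real i + 1/2, real (sO i) + 1/2) | i. i < n}"

(* M(x) = J(x - O, x - O) + 1, expanded bilinearly *)
definition maslov :: "nat \<Rightarrow> (nat \<Rightarrow> nat) \<Rightarrow> (real \<times> real) set \<Rightarrow> real" where
  "maslov n sO x =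
     J_pairs x x - J_pairs x (O_centers n sO) - J_pairs (O_centers n sO) x
     + J_pairs (O_centers n sO) (O_centers n sO) + 1"

(* x^+ : upper right corners of the X squares (reduced to [0,n)^2);
   x^- : lower left corners of the X squares *)
definition x_plus :: "nat \<Rightarrow> (nat \<Rightarrow> nat) \<Rightarrow> (real \<times> real) set" where
  "x_plus n sX = {(real ((i + 1) mod n), real ((sX i + 1) mod n)) | i. i < n}"

definition x_minus :: "nat \<Rightarrow> (nat \<Rightarrow> nat) \<Rightarrow> (real \<times> real) set" where
  "x_minus n sX = {(real i, real (sX i)) | i. i < n}"

end

theory Submission
  imports Defs
begin


definition ind :: "bool \<Rightarrow> int" where "ind P = (if P then 1 else 0)"

lemma card_ind_gen: "finite A \<Longrightarrow> int (card {i\<in>A. P i}) = (\<Sum>i\<in>A. ind (P i))"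
proof -
  assume A: "finite A"
  have "card {i\<in>A. P i} = (\<Sum>i\<in>{i\<in>A. P i}. (1::nat))" by simp
  also have "\<dots> = (\<Sum>i\<in>A. if P i then 1 else 0)" by (rule sum.inter_filter) (rule A)
  finally show ?thesis by (simp add: ind_def of_nat_sum, intro sum.cong, auto)
qed

lemma card_ind: "int (card {i. i < (n::nat) \<and> P i}) = (\<Sum>i<n. ind (P i))"
proof -
  have "{i. i < n \<and> P i} = {i\<in>{..<n}. P i}" by auto
  moreover have "int (card {i\<in>{..<n}. P i}) = (\<Sum>i<n. ind (P i))" by (rule card_ind_gen) simp
  ultimately show ?thesis by simp
qed

lemma sum_bij_reindex:
  assumes "bij_betw f {..<(n::nat)} {..<n}"
  shows "(\<Sum>j<n. g (f j)) = (\<Sum>r<n. g r)"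
  using sum.reindex_bij_betw[OF assms] .

lemma sum_delta_bij:
  assumes "bij_betw f {..<(n::nat)} {..<n}" "c < n"
  shows "(\<Sum>j<n. if f j = c then g j else 0) = g (inv_into {..<n} f c)"
proof -
  let ?j = "inv_into {..<n} f c"
  have j: "?j < n" "f ?j = c"
    using assms bij_betw_inv_into_right[OF assms(1)] bij_betw_inv_into[OF assms(1)]
    by (auto simp: bij_betw_def)
  have "\<And>j. j < n \<Longrightarrow> (f j = c) = (j = ?j)"
    using assms(1) j by (auto simp: bij_betw_def inj_on_def)
  then have "(\<Sum>j<n. if f j = c then g j else 0) = (\<Sum>j<n. if j = ?j then g j else 0)"
    by (intro sum.cong) auto
  also have "\<dots> = g ?j" using j by (subst sum.delta) auto
  finally show ?thesis .
qed

lemma antisym_sum: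
  fixes F :: "nat \<Rightarrow> nat \<Rightarrow> int"
  assumes "\<And>i j. i < n \<Longrightarrow> j < n \<Longrightarrow> F i j + F j i = 0"
  shows "(\<Sum>i<n. \<Sum>j<n. F i j) = 0"
proof -
  have "(\<Sum>i<n. \<Sum>j<n. F i j) = (\<Sum>i<n. \<Sum>j<n. F j i)" by (rule sum.swap)
  then have "2 * (\<Sum>i<n. \<Sum>j<n. F i j) = (\<Sum>i<n. \<Sum>j<n. F i j + F j i)"
    by (simp add: sum.distrib)
  also have "\<dots> = 0" using assms by (intro sum.neutral ballI) auto
  finally show ?thesis by simp
qed

lemma I_pairs_idx:
  fixes n m :: nat
  assumes "inj_on (\<lambda>i. (f i, g i)) {..<n}" "inj_on (\<lambda>j. (h j, k j)) {..<m}"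
  shows "int (I_pairs {(f i, g i) | i. i < n} {(h j, k j) | j. j < m})
     = (\<Sum>i<n. \<Sum>j<m. ind (f i < h j \<and> g i < k j))"
proof -
  let ?S = "{(i, j). i < n \<and> j < m \<and> f i < h j \<and> g i < k j}"
  let ?F = "\<lambda>(i, j). ((f i, g i), (h j, k j))"
  have eq: "{(a, b). a \<in> {(f i, g i) | i. i < n} \<and> b \<in> {(h j, k j) | j. j < m} \<and> fst a < fst b \<and> snd a < snd b}
      = ?F ` ?S" by auto
  have inj: "inj_on ?F ?S" using assms by (auto simp: inj_on_def)
  have S_eq: "?S = {p \<in> {..<n} \<times> {..<m}. f (fst p) < h (snd p) \<and> g (fst p) < k (snd p)}" by auto
  have "int (card (?F ` ?S)) = int (card ?S)" using card_image[OF inj] by simp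
  also have "\<dots> = (\<Sum>p\<in>{..<n} \<times> {..<m}. ind (f (fst p) < h (snd p) \<and> g (fst p) < k (snd p)))"
    unfolding S_eq by (simp add: card_ind_gen)
  also have "\<dots> = (\<Sum>i<n. \<Sum>j<m. ind (f i < h j \<and> g i < k j))"
    by (simp add: sum.cartesian_product split_beta)
  finally show ?thesis unfolding I_pairs_def eq .
qed
lemma half_lt1: "(real a < real b + 1/2) = (a \<le> b)"
proof
  assume "real a < real b + 1/2"
  then have "real a < real (b + 1)" by simp
  then show "a \<le> b" by linarith
qed simp

lemma half_lt2: "(real a + 1/2 < real b) = (a < b)"
proof
  assume "real a + 1/2 < real b"
  then have "real a < real b" by simp
  then show "a < b" by simp
next
  assume "a < b"
  then have "real (a + 1) \<le> real b" by linarith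
  then show "real a + 1/2 < real b" by simp
qed

lemma half_lt3: "(real a + 1/2 < real b + 1/2) = (a < b)" by simp

lemma maslov_eq:
  "maslov n sO x = real (I_pairs x x) - real (I_pairs x (O_centers n sO))
     - real (I_pairs (O_centers n sO) x) + real (I_pairs (O_centers n sO) (O_centers n sO)) + 1"
  unfolding maslov_def J_pairs_def by (simp add: field_simps)

lemma inj_O: "inj_on (\<lambda>i. (real i + 1/2, real (sO i) + 1/2)) {..<(n::nat)}"
  by (auto simp: inj_on_def)

lemma inj_xm: "inj_on (\<lambda>i. (real i, real (sX i))) {..<(n::nat)}"
  by (auto simp: inj_on_def)

lemma mod_wrap: "i < n \<Longrightarrow> Suc i mod n = (if Suc i = n then 0 else Suc i)"
  by (cases "Suc i = n") auto

lemma inj_xp: "inj_on (\<lambda>i. (real ((i + 1) mod n), real ((sX i + 1) mod n))) {..<(n::nat)}"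
proof (rule inj_onI)
  fix i j assume "i \<in> {..<n}" "j \<in> {..<n}"
    "(real ((i + 1) mod n), real ((sX i + 1) mod n)) = (real ((j + 1) mod n), real ((sX j + 1) mod n))"
  then have "i < n" "j < n" "(i + 1) mod n = (j + 1) mod n" by auto
  then show "i = j" by (auto simp: mod_wrap split: if_splits)
qed

lemma O_centers_eq: "O_centers n sO = {(real i + 1/2, real (sO i) + 1/2) | i. i < n}"
  unfolding O_centers_def ..

lemma IOO: "int (I_pairs (O_centers n sO) (O_centers n sO)) = (\<Sum>i<n. \<Sum>j<n. ind (i < j \<and> sO i < sO j))"
  unfolding O_centers_eq by (simp add: I_pairs_idx[OF inj_O inj_O])

lemma maslov_minus:
  "maslov n sO (x_minus n sX) = real_of_int (1 + (\<Sum>i<n. \<Sum>j<n.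
      ind (i < j \<and> sX i < sX j) + ind (i < j \<and> sO i < sO j)
      - ind (i \<le> j \<and> sX i \<le> sO j) - ind (i < j \<and> sO i < sX j)))"
proof -
  have 1: "int (I_pairs (x_minus n sX) (x_minus n sX)) = (\<Sum>i<n. \<Sum>j<n. ind (i < j \<and> sX i < sX j))"
    unfolding x_minus_def by (simp add: I_pairs_idx[OF inj_xm inj_xm])
  have 2: "int (I_pairs (x_minus n sX) (O_centers n sO)) = (\<Sum>i<n. \<Sum>j<n. ind (i \<le> j \<and> sX i \<le> sO j))"
    unfolding x_minus_def O_centers_eq by (simp add: I_pairs_idx[OF inj_xm inj_O] half_lt1)
  have 3: "int (I_pairs (O_centers n sO) (x_minus n sX)) = (\<Sum>i<n. \<Sum>j<n. ind (i < j \<and> sO i < sX j))"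
    unfolding x_minus_def O_centers_eq by (simp add: I_pairs_idx[OF inj_O inj_xm] half_lt2)
  have "maslov n sO (x_minus n sX) = real_of_int (int (I_pairs (x_minus n sX) (x_minus n sX))
     - int (I_pairs (x_minus n sX) (O_centers n sO)) - int (I_pairs (O_centers n sO) (x_minus n sX))
     + int (I_pairs (O_centers n sO) (O_centers n sO)) + 1)"
    unfolding maslov_eq by simp
  also have "\<dots> = real_of_int (1 + (\<Sum>i<n. \<Sum>j<n.
      ind (i < j \<and> sX i < sX j) + ind (i < j \<and> sO i < sO j)
      - ind (i \<le> j \<and> sX i \<le> sO j) - ind (i < j \<and> sO i < sX j)))"
    unfolding 1 2 3 IOO by (simp add: sum.distrib sum_subtractf)
  finally show ?thesis .
qed

lemma maslov_plus:
  "maslov n sO (x_plus n sX) = real_of_int (1 + (\<Sum>i<n. \<Sum>j<n.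
      ind ((i + 1) mod n < (j + 1) mod n \<and> (sX i + 1) mod n < (sX j + 1) mod n)
      + ind (i < j \<and> sO i < sO j)
      - ind ((i + 1) mod n \<le> j \<and> (sX i + 1) mod n \<le> sO j)
      - ind (i < (j + 1) mod n \<and> sO i < (sX j + 1) mod n)))"
proof -
  have 1: "int (I_pairs (x_plus n sX) (x_plus n sX)) = (\<Sum>i<n. \<Sum>j<n.
      ind ((i + 1) mod n < (j + 1) mod n \<and> (sX i + 1) mod n < (sX j + 1) mod n))"
    unfolding x_plus_def by (subst I_pairs_idx[OF inj_xp inj_xp]) simp
  have 2: "int (I_pairs (x_plus n sX) (O_centers n sO)) = (\<Sum>i<n. \<Sum>j<n.
      ind ((i + 1) mod n \<le> j \<and> (sX i + 1) mod n \<le> sO j))"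
    unfolding x_plus_def O_centers_eq by (subst I_pairs_idx[OF inj_xp inj_O]) (simp add: half_lt1)
  have 3: "int (I_pairs (O_centers n sO) (x_plus n sX)) = (\<Sum>i<n. \<Sum>j<n.
      ind (i < (j + 1) mod n \<and> sO i < (sX j + 1) mod n))"
    unfolding x_plus_def O_centers_eq by (subst I_pairs_idx[OF inj_O inj_xp]) (simp add: half_lt2)
  have "maslov n sO (x_plus n sX) = real_of_int (int (I_pairs (x_plus n sX) (x_plus n sX))
     - int (I_pairs (x_plus n sX) (O_centers n sO)) - int (I_pairs (O_centers n sO) (x_plus n sX))
     + int (I_pairs (O_centers n sO) (O_centers n sO)) + 1)"
    unfolding maslov_eq by simp
  also have "\<dots> = real_of_int (1 + (\<Sum>i<n. \<Sum>j<n.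
      ind ((i + 1) mod n < (j + 1) mod n \<and> (sX i + 1) mod n < (sX j + 1) mod n)
      + ind (i < j \<and> sO i < sO j)
      - ind ((i + 1) mod n \<le> j \<and> (sX i + 1) mod n \<le> sO j)
      - ind (i < (j + 1) mod n \<and> sO i < (sX j + 1) mod n)))"
    unfolding 1 2 3 IOO by (simp add: sum.distrib sum_subtractf)
  finally show ?thesis .
qed


lemma delta_ind:
  assumes "bij_betw f {..<(n::nat)} {..<n}" "c < n"
  shows "(\<Sum>j<n. ind (f j = c \<and> P j)) = ind (P (inv_into {..<n} f c))"
proof -
  have "(\<Sum>j<n. ind (f j = c \<and> P j)) = (\<Sum>j<n. if f j = c then ind (P j) else 0)"
    by (intro sum.cong) (auto simp: ind_def)
  also have "\<dots> = ind (P (inv_into {..<n} f c))" by (rule sum_delta_bij[OF assms])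
  finally show ?thesis .
qed

lemma pw_cross:
  fixes i k m xi oi ok :: nat
  assumes "(i = k) = (oi = ok)" "(i = m) = (xi = ok)" "k \<noteq> m" "xi \<noteq> oi"
  shows "(if (min xi oi < ok \<and> ok < max xi oi \<and> min k m < i \<and> i < max k m)
     then - ((if xi < oi then 1 else -1) * (if k < m then 1 else -1)) else (0::int))
   = ind (k < i) * (ind (xi \<noteq> ok \<and> oi < ok) - ind (xi < ok))
     + ind (m < i) * (ind (oi \<noteq> ok \<and> xi < ok) - ind (oi < ok))"
  using assms unfolding ind_def min_def max_def by auto

locale gd =
  fixes n :: nat and sX sO :: "nat \<Rightarrow> nat"
  assumes G: "grid_diagram n sX sO"
begin

lemma bX: "bij_betw sX {..<n} {..<n}" and bO: "bij_betw sO {..<n} {..<n}"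
  and XO: "i < n \<Longrightarrow> sX i \<noteq> sO i"
  using G unfolding grid_diagram_def by auto

lemma sX_lt: "i < n \<Longrightarrow> sX i < n" using bX by (auto simp: bij_betw_def)
lemma sO_lt: "i < n \<Longrightarrow> sO i < n" using bO by (auto simp: bij_betw_def)
lemma sX_inj: "i < n \<Longrightarrow> j < n \<Longrightarrow> (sX i = sX j) = (i = j)"
  using bX by (auto simp: bij_betw_def inj_on_def)
lemma sO_inj: "i < n \<Longrightarrow> j < n \<Longrightarrow> (sO i = sO j) = (i = j)"
  using bO by (auto simp: bij_betw_def inj_on_def)

lemma bxc: "bij_betw (xcol n sX) {..<n} {..<n}"
  unfolding xcol_def by (rule bij_betw_inv_into[OF bX])
lemma boc: "bij_betw (ocol n sO) {..<n} {..<n}"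
  unfolding ocol_def by (rule bij_betw_inv_into[OF bO])
lemma xc_lt: "r < n \<Longrightarrow> xcol n sX r < n" using bxc by (auto simp: bij_betw_def)
lemma oc_lt: "r < n \<Longrightarrow> ocol n sO r < n" using boc by (auto simp: bij_betw_def)
lemma sX_xc: "r < n \<Longrightarrow> sX (xcol n sX r) = r"
  unfolding xcol_def using bij_betw_inv_into_right[OF bX] by auto
lemma sO_oc: "r < n \<Longrightarrow> sO (ocol n sO r) = r"
  unfolding ocol_def using bij_betw_inv_into_right[OF bO] by auto
lemma xc_sX: "i < n \<Longrightarrow> xcol n sX (sX i) = i"
  unfolding xcol_def using bij_betw_inv_into_left[OF bX] by auto
lemma oc_sO: "i < n \<Longrightarrow> ocol n sO (sO i) = i"
  unfolding ocol_def using bij_betw_inv_into_left[OF bO] by auto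

lemma bnx: "bij_betw (grid_next n sX sO) {..<n} {..<n}"
proof -
  have "bij_betw (xcol n sX \<circ> sO) {..<n} {..<n}" by (rule bij_betw_trans[OF bO bxc])
  then show ?thesis unfolding grid_next_def[abs_def] by (simp add: comp_def)
qed

definition T1 :: "nat \<Rightarrow> nat \<Rightarrow> int" where
  "T1 i k = ind (k < i) * (ind (sX i \<noteq> sO k \<and> sO i < sO k) - ind (sX i < sO k))"
definition T2 :: "nat \<Rightarrow> nat \<Rightarrow> int" where
  "T2 i m = ind (m < i) * (ind (sO i \<noteq> sX m \<and> sX i < sX m) - ind (sO i < sX m))"

lemma cross_pw:
  assumes "i < n" "k < n"
  shows "(if grid_crossing n sX sO i (sO k) then crossing_sign n sX sO i (sO k) else 0)
     = T1 i k + T2 i (grid_next n sX sO k)"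
proof -
  define m where "m = grid_next n sX sO k"
  have m: "m < n" "sX m = sO k" "xcol n sX (sO k) = m"
    using assms unfolding m_def grid_next_def by (auto simp: xc_lt sO_lt sX_xc)
  have ock: "ocol n sO (sO k) = k" using assms by (simp add: oc_sO)
  have h1: "(i = k) = (sO i = sO k)" using assms by (simp add: sO_inj)
  have h2: "(i = m) = (sX i = sO k)" using assms m by (metis sX_inj)
  have h3: "k \<noteq> m" using m XO assms by metis
  have h4: "sX i \<noteq> sO i" using XO assms by simp
  show ?thesis
    unfolding grid_crossing_def crossing_sign_def T1_def T2_def m_def[symmetric] ock m(3) m(2)
    using pw_cross[OF h1 h2 h3 h4] by simp
qed

definition Wt :: "nat \<Rightarrow> nat \<Rightarrow> int" where
  "Wt i j = ind (j < i) * (ind (sO i \<noteq> sX j \<and> sX i < sX j) - ind (sO i < sX j)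
      - ind (sX i < sO j) + ind (sX i \<noteq> sO j \<and> sO i < sO j))"

lemma writhe_sum: "grid_writhe n sX sO = (\<Sum>i<n. \<Sum>j<n. Wt i j)"
proof -
  have "grid_writhe n sX sO = (\<Sum>i<n. \<Sum>k<n.
     (if grid_crossing n sX sO i (sO k) then crossing_sign n sX sO i (sO k) else 0))"
    unfolding grid_writhe_def
  proof (rule sum.cong[OF refl])
    fix i
    have r: "\<And>g. (\<Sum>r<n. g r) = (\<Sum>k<n. g (sO k))" using sum_bij_reindex[OF bO] by metis
    show "(\<Sum>j<n. if grid_crossing n sX sO i j then crossing_sign n sX sO i j else 0) =
      (\<Sum>k<n. if grid_crossing n sX sO i (sO k) then crossing_sign n sX sO i (sO k) else 0)"
      by (rule r)
  qed
  also have "\<dots> = (\<Sum>i<n. \<Sum>k<n. T1 i k + T2 i (grid_next n sX sO k))"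
    by (intro sum.cong refl) (simp add: cross_pw)
  also have "\<dots> = (\<Sum>i<n. (\<Sum>k<n. T1 i k) + (\<Sum>k<n. T2 i k))"
    by (intro sum.cong refl) (simp add: sum.distrib sum_bij_reindex[OF bnx])
  also have "\<dots> = (\<Sum>i<n. \<Sum>j<n. Wt i j)"
    by (intro sum.cong refl) (simp add: sum.distrib[symmetric] T1_def T2_def Wt_def algebra_simps)
  finally show ?thesis .
qed

end



lemma pw_minus:
  fixes i j xi xj oi oj :: nat
  assumes "i = j \<Longrightarrow> xi = xj \<and> oi = oj" "i \<noteq> j \<Longrightarrow> xi \<noteq> xj \<and> oi \<noteq> oj" "xi \<noteq> oi" "xj \<noteq> oj"
  defines "F \<equiv> \<lambda>i j xi xj oi oj.
     ind (i < j \<and> xi < xj) + ind (i < j \<and> oi < oj) - ind (i \<le> j \<and> xi \<le> oj) - ind (i < j \<and> oi < xj)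
   + ind (j < i) * (ind (oi \<noteq> xj \<and> xi < xj) - ind (oi < xj) - ind (xi < oj) + ind (xi \<noteq> oj \<and> oi < oj))
   + (ind (oj = xi \<and> i < j \<and> xi < oi) + ind (xj = oi \<and> j < i \<and> xi < oi))
   - ind (oj = xi \<and> i \<noteq> j \<and> xi < oi) + ind (i = j \<and> xi < oi)"
  shows "F i j xi xj oi oj + F j i xj xi oj oi = 0"
  using assms(1-4) unfolding F_def ind_def by (cases "i < j"; cases "j < i"; auto)

lemma pw_plus:
  fixes i j xi xj oi oj :: nat
  assumes "i = j \<Longrightarrow> xi = xj \<and> oi = oj" "i \<noteq> j \<Longrightarrow> xi \<noteq> xj \<and> oi \<noteq> oj" "xi \<noteq> oi" "xj \<noteq> oj"
  defines "F \<equiv> \<lambda>i j xi xj oi oj.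
     ind (i < j \<and> xi < xj) + ind (i < j \<and> oi < oj) - ind (i < j \<and> xi < oj) - ind (i \<le> j \<and> oi \<le> xj)
   + ind (j < i) * (ind (oi \<noteq> xj \<and> xi < xj) - ind (oi < xj) - ind (xi < oj) + ind (xi \<noteq> oj \<and> oi < oj))
   + (ind (oj = xi \<and> j < i \<and> oi < xi) + ind (xj = oi \<and> i < j \<and> oi < xi))
   - ind (xj = oi \<and> i \<noteq> j \<and> oi < xi) + ind (i = j \<and> oi < xi)"
  shows "F i j xi xj oi oj + F j i xj xi oj oi = 0"
  using assms(1-4) unfolding F_def ind_def by (cases "i < j"; cases "j < i"; auto)

lemma pw_wrap:
  fixes n i j xi xj oi oj :: nat
  assumes "i < n" "j < n" "xi < n" "xj < n" "oi < n" "oj < n" "i = j \<Longrightarrow> xi = xj"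
  shows "ind ((i + 1) mod n < (j + 1) mod n \<and> (xi + 1) mod n < (xj + 1) mod n)
      + ind (i < j \<and> oi < oj)
      - ind ((i + 1) mod n \<le> j \<and> (xi + 1) mod n \<le> oj)
      - ind (i < (j + 1) mod n \<and> oi < (xj + 1) mod n)
    = (ind (i < j \<and> xi < xj) + ind (i < j \<and> oi < oj) - ind (i < j \<and> xi < oj) - ind (i \<le> j \<and> oi \<le> xj))
    + (ind (i = j \<and> Suc xi = n) + ind (Suc i = n \<and> xi < xj) - ind (Suc i = n \<and> xi < oj)
       - ind (Suc j = n \<and> xi < xj) + ind (Suc j = n \<and> oi \<le> xj)
       - ind (Suc i = n \<and> Suc xj = n) - ind (Suc j = n \<and> Suc xi = n))"
  using assms unfolding ind_def by (simp add: mod_wrap) (cases "i < j"; cases "j < i"; auto)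


lemma sum_diag: "(\<Sum>i<(n::nat). \<Sum>j<n. ind (i = j \<and> P i)) = (\<Sum>i<n. ind (P i))"
proof (rule sum.cong[OF refl])
  fix i assume "i \<in> {..<n}"
  have "(\<Sum>j<n. ind (i = j \<and> P i)) = (\<Sum>j<n. if j = i then ind (P i) else 0)"
    by (intro sum.cong) (auto simp: ind_def)
  also have "\<dots> = ind (P i)" using \<open>i \<in> {..<n}\<close> by (subst sum.delta) auto
  finally show "(\<Sum>j<n. ind (i = j \<and> P i)) = ind (P i)" .
qed

lemma sum_pt: "(q::nat) < n \<Longrightarrow> (\<Sum>r<n. ind (r = q)) = 1"
proof -
  assume "q < n"
  have "(\<Sum>r<n. ind (r = q)) = (\<Sum>r<n. if r = q then 1 else 0)" by (simp add: ind_def)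
  also have "\<dots> = 1" using \<open>q < n\<close> by (subst sum.delta) auto
  finally show ?thesis .
qed

lemma row_sum: "(a::nat) < n \<Longrightarrow> (\<Sum>i<n. \<Sum>j<n. ind (i = a \<and> P i j)) = (\<Sum>j<n. ind (P a j))"
proof -
  assume a: "a < n"
  have "(\<Sum>i<n. \<Sum>j<n. ind (i = a \<and> P i j)) = (\<Sum>j<n. \<Sum>i<n. ind (i = a \<and> P i j))"
    by (rule sum.swap)
  also have "\<dots> = (\<Sum>j<n. ind (P a j))"
  proof (rule sum.cong[OF refl])
    fix j
    have "(\<Sum>i<n. ind (i = a \<and> P i j)) = (\<Sum>i<n. if i = a then ind (P a j) else 0)"
      by (intro sum.cong) (auto simp: ind_def)
    also have "\<dots> = ind (P a j)" using a by (subst sum.delta) auto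
    finally show "(\<Sum>i<n. ind (i = a \<and> P i j)) = ind (P a j)" .
  qed
  finally show ?thesis .
qed

lemma col_sum: "(a::nat) < n \<Longrightarrow> (\<Sum>i<n. \<Sum>j<n. ind (j = a \<and> P i j)) = (\<Sum>i<n. ind (P i a))"
proof (rule sum.cong[OF refl])
  fix i assume a: "a < n"
  have "(\<Sum>j<n. ind (j = a \<and> P i j)) = (\<Sum>j<n. if j = a then ind (P i a) else 0)"
    by (intro sum.cong) (auto simp: ind_def)
  also have "\<dots> = ind (P i a)" using a by (subst sum.delta) auto
  finally show "(\<Sum>j<n. ind (j = a \<and> P i j)) = ind (P i a)" .
qed

context gd
begin

lemma cX: "i < n \<Longrightarrow> (\<Sum>j<n. ind (sO j = sX i \<and> i \<noteq> j \<and> Q)) = ind Q"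
proof -
  assume i: "i < n"
  have "(\<Sum>j<n. ind (sO j = sX i \<and> i \<noteq> j \<and> Q)) = ind (i \<noteq> ocol n sO (sX i) \<and> Q)"
    using delta_ind[OF bO sX_lt[OF i], of "\<lambda>j. i \<noteq> j \<and> Q"] unfolding ocol_def by simp
  moreover have "ocol n sO (sX i) \<noteq> i" using sO_oc[OF sX_lt[OF i]] XO[OF i] by metis
  ultimately show ?thesis by auto
qed

lemma cO: "i < n \<Longrightarrow> (\<Sum>j<n. ind (sX j = sO i \<and> i \<noteq> j \<and> Q)) = ind Q"
proof -
  assume i: "i < n"
  have "(\<Sum>j<n. ind (sX j = sO i \<and> i \<noteq> j \<and> Q)) = ind (i \<noteq> xcol n sX (sO i) \<and> Q)"
    using delta_ind[OF bX sO_lt[OF i], of "\<lambda>j. i \<noteq> j \<and> Q"] unfolding xcol_def by simp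
  moreover have "xcol n sX (sO i) \<noteq> i" using sX_xc[OF sO_lt[OF i]] XO[OF i] by metis
  ultimately show ?thesis by auto
qed

lemma down_sum: "int (down_cusps n sX sO) = (\<Sum>i<n. \<Sum>j<n.
    ind (sO j = sX i \<and> j < i \<and> sO i < sX i) + ind (sX j = sO i \<and> i < j \<and> sO i < sX i))"
proof -
  have a: "(\<Sum>j<n. ind (sO j = sX i \<and> j < i \<and> sO i < sX i)) = ind (ocol n sO (sX i) < i \<and> sO i < sX i)"
    if "i < n" for i
    using delta_ind[OF bO sX_lt[OF that], of "\<lambda>j. j < i \<and> sO i < sX i"] unfolding ocol_def by simp
  have b: "(\<Sum>j<n. ind (sX j = sO i \<and> i < j \<and> sO i < sX i)) = ind (i < xcol n sX (sO i) \<and> sO i < sX i)"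
    if "i < n" for i
    using delta_ind[OF bX sO_lt[OF that], of "\<lambda>j. i < j \<and> sO i < sX i"] unfolding xcol_def by simp
  show ?thesis unfolding down_cusps_def of_nat_add card_ind
    by (simp add: sum.distrib a b)
qed

lemma up_sum: "int (up_cusps n sX sO) = (\<Sum>i<n. \<Sum>j<n.
    ind (sO j = sX i \<and> i < j \<and> sX i < sO i) + ind (sX j = sO i \<and> j < i \<and> sX i < sO i))"
proof -
  have a: "(\<Sum>j<n. ind (sO j = sX i \<and> i < j \<and> sX i < sO i)) = ind (i < ocol n sO (sX i) \<and> sX i < sO i)"
    if "i < n" for i
    using delta_ind[OF bO sX_lt[OF that], of "\<lambda>j. i < j \<and> sX i < sO i"] unfolding ocol_def by simp
  have b: "(\<Sum>j<n. ind (sX j = sO i \<and> j < i \<and> sX i < sO i)) = ind (xcol n sX (sO i) < i \<and> sX i < sO i)"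
    if "i < n" for i
    using delta_ind[OF bX sO_lt[OF that], of "\<lambda>j. j < i \<and> sX i < sO i"] unfolding xcol_def by simp
  show ?thesis unfolding up_cusps_def of_nat_add card_ind
    by (simp add: sum.distrib a b)
qed

end



context gd
begin

lemma minus_core: "(\<Sum>i<n. \<Sum>j<n.
      (ind (i < j \<and> sX i < sX j) + ind (i < j \<and> sO i < sO j)
      - ind (i \<le> j \<and> sX i \<le> sO j) - ind (i < j \<and> sO i < sX j))
    + Wt i j
    + (ind (sO j = sX i \<and> i < j \<and> sX i < sO i) + ind (sX j = sO i \<and> j < i \<and> sX i < sO i))) = 0"
  (is "(\<Sum>i<n. \<Sum>j<n. ?E i j) = 0")
proof -
  define G where "G i j = ?E i j - ind (sO j = sX i \<and> i \<noteq> j \<and> sX i < sO i) + ind (i = j \<and> sX i < sO i)" for i j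
  have "(\<Sum>i<n. \<Sum>j<n. G i j) = 0"
  proof (rule antisym_sum)
    fix i j assume ij: "i < n" "j < n"
    have h1: "i = j \<Longrightarrow> sX i = sX j \<and> sO i = sO j" by simp
    have h2: "i \<noteq> j \<Longrightarrow> sX i \<noteq> sX j \<and> sO i \<noteq> sO j" using ij sX_inj sO_inj by auto
    show "G i j + G j i = 0"
      using pw_minus[OF h1 h2 XO[OF ij(1)] XO[OF ij(2)]] unfolding G_def Wt_def by simp
  qed
  moreover have "(\<Sum>i<n. \<Sum>j<n. G i j) = (\<Sum>i<n. \<Sum>j<n. ?E i j)
      - (\<Sum>i<n. \<Sum>j<n. ind (sO j = sX i \<and> i \<noteq> j \<and> sX i < sO i))
      + (\<Sum>i<n. \<Sum>j<n. ind (i = j \<and> sX i < sO i))"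
    unfolding G_def by (simp add: sum.distrib sum_subtractf)
  moreover have "(\<Sum>i<n. \<Sum>j<n. ind (sO j = sX i \<and> i \<noteq> j \<and> sX i < sO i)) = (\<Sum>i<n. ind (sX i < sO i))"
    by (intro sum.cong refl) (simp add: cX)
  moreover have "(\<Sum>i<n. \<Sum>j<n. ind (i = j \<and> sX i < sO i)) = (\<Sum>i<n. ind (sX i < sO i))"
    by (rule sum_diag)
  ultimately show ?thesis by simp
qed

lemma plus_core: "(\<Sum>i<n. \<Sum>j<n.
      (ind (i < j \<and> sX i < sX j) + ind (i < j \<and> sO i < sO j) - ind (i < j \<and> sX i < sO j) - ind (i \<le> j \<and> sO i \<le> sX j))
    + Wt i j
    + (ind (sO j = sX i \<and> j < i \<and> sO i < sX i) + ind (sX j = sO i \<and> i < j \<and> sO i < sX i))) = 0"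
  (is "(\<Sum>i<n. \<Sum>j<n. ?E i j) = 0")
proof -
  define G where "G i j = ?E i j - ind (sX j = sO i \<and> i \<noteq> j \<and> sO i < sX i) + ind (i = j \<and> sO i < sX i)" for i j
  have "(\<Sum>i<n. \<Sum>j<n. G i j) = 0"
  proof (rule antisym_sum)
    fix i j assume ij: "i < n" "j < n"
    have h1: "i = j \<Longrightarrow> sX i = sX j \<and> sO i = sO j" by simp
    have h2: "i \<noteq> j \<Longrightarrow> sX i \<noteq> sX j \<and> sO i \<noteq> sO j" using ij sX_inj sO_inj by auto
    show "G i j + G j i = 0"
      using pw_plus[OF h1 h2 XO[OF ij(1)] XO[OF ij(2)]] unfolding G_def Wt_def by simp
  qed
  moreover have "(\<Sum>i<n. \<Sum>j<n. G i j) = (\<Sum>i<n. \<Sum>j<n. ?E i j)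
      - (\<Sum>i<n. \<Sum>j<n. ind (sX j = sO i \<and> i \<noteq> j \<and> sO i < sX i))
      + (\<Sum>i<n. \<Sum>j<n. ind (i = j \<and> sO i < sX i))"
    unfolding G_def by (simp add: sum.distrib sum_subtractf)
  moreover have "(\<Sum>i<n. \<Sum>j<n. ind (sX j = sO i \<and> i \<noteq> j \<and> sO i < sX i)) = (\<Sum>i<n. ind (sO i < sX i))"
    by (intro sum.cong refl) (simp add: cO)
  moreover have "(\<Sum>i<n. \<Sum>j<n. ind (i = j \<and> sO i < sX i)) = (\<Sum>i<n. ind (sO i < sX i))"
    by (rule sum_diag)
  ultimately show ?thesis by simp
qed

end


context gd
begin

lemma wrap_sum: "(\<Sum>i<n. \<Sum>j<n.
   ind (i = j \<and> Suc (sX i) = n) + ind (Suc i = n \<and> sX i < sX j) - ind (Suc i = n \<and> sX i < sO j)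
   - ind (Suc j = n \<and> sX i < sX j) + ind (Suc j = n \<and> sO i \<le> sX j)
   - ind (Suc i = n \<and> Suc (sX j) = n) - ind (Suc j = n \<and> Suc (sX i) = n)) = 0"
proof (cases n)
  case 0
  then show ?thesis by simp
next
  case (Suc N)
  have N: "N < n" using Suc by simp
  have q: "sX N < n" by (rule sX_lt[OF N])
  have rX: "\<And>g. (\<Sum>j<n. g (sX j)) = (\<Sum>r<n. g r)" using sum_bij_reindex[OF bX] by metis
  have rO: "\<And>g. (\<Sum>j<n. g (sO j)) = (\<Sum>r<n. g r)" using sum_bij_reindex[OF bO] by metis
  have one: "(\<Sum>i<n. ind (sX i = N)) = 1"
    using rX[of "\<lambda>r. ind (r = N)"] sum_pt[OF N] by simp
  have ta: "(\<Sum>i<n. \<Sum>j<n. ind (i = j \<and> sX i = N)) = 1"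
    using sum_diag[where n=n and P="\<lambda>i. sX i = N"] one by simp
  have tb: "(\<Sum>i<n. \<Sum>j<n. ind (i = N \<and> sX i < sX j)) = (\<Sum>r<n. ind (sX N < r))"
    using row_sum[OF N, of "\<lambda>i j. sX i < sX j"] rX[of "\<lambda>r. ind (sX N < r)"] by simp
  have tc: "(\<Sum>i<n. \<Sum>j<n. ind (i = N \<and> sX i < sO j)) = (\<Sum>r<n. ind (sX N < r))"
    using row_sum[OF N, of "\<lambda>i j. sX i < sO j"] rO[of "\<lambda>r. ind (sX N < r)"] by simp
  have td: "(\<Sum>i<n. \<Sum>j<n. ind (j = N \<and> sX i < sX j)) = (\<Sum>r<n. ind (r < sX N))"
    using col_sum[OF N, of "\<lambda>i j. sX i < sX j"] rX[of "\<lambda>r. ind (r < sX N)"] by simp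
  have te: "(\<Sum>i<n. \<Sum>j<n. ind (j = N \<and> sO i \<le> sX j)) = (\<Sum>r<n. ind (r \<le> sX N))"
    using col_sum[OF N, of "\<lambda>i j. sO i \<le> sX j"] rO[of "\<lambda>r. ind (r \<le> sX N)"] by simp
  have tf: "(\<Sum>i<n. \<Sum>j<n. ind (i = N \<and> sX j = N)) = 1"
    using row_sum[OF N, of "\<lambda>i j. sX j = N"] one by simp
  have tg: "(\<Sum>i<n. \<Sum>j<n. ind (j = N \<and> sX i = N)) = 1"
    using col_sum[OF N, of "\<lambda>i j. sX i = N"] one by simp
  have tde: "(\<Sum>r<n. ind (r \<le> sX N)) - (\<Sum>r<n. ind (r < sX N)) = 1"
  proof -
    have "(\<Sum>r<n. ind (r \<le> sX N)) - (\<Sum>r<n. ind (r < sX N)) = (\<Sum>r<n. ind (r = sX N))"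
      unfolding sum_subtractf[symmetric] by (intro sum.cong) (auto simp: ind_def)
    then show ?thesis using sum_pt[OF q] by simp
  qed
  have "(\<Sum>i<n. \<Sum>j<n.
   ind (i = j \<and> Suc (sX i) = n) + ind (Suc i = n \<and> sX i < sX j) - ind (Suc i = n \<and> sX i < sO j)
   - ind (Suc j = n \<and> sX i < sX j) + ind (Suc j = n \<and> sO i \<le> sX j)
   - ind (Suc i = n \<and> Suc (sX j) = n) - ind (Suc j = n \<and> Suc (sX i) = n))
   = (\<Sum>i<n. \<Sum>j<n. ind (i = j \<and> sX i = N)) + (\<Sum>i<n. \<Sum>j<n. ind (i = N \<and> sX i < sX j))
     - (\<Sum>i<n. \<Sum>j<n. ind (i = N \<and> sX i < sO j)) - (\<Sum>i<n. \<Sum>j<n. ind (j = N \<and> sX i < sX j))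
     + (\<Sum>i<n. \<Sum>j<n. ind (j = N \<and> sO i \<le> sX j)) - (\<Sum>i<n. \<Sum>j<n. ind (i = N \<and> sX j = N))
     - (\<Sum>i<n. \<Sum>j<n. ind (j = N \<and> sX i = N))"
    unfolding Suc by (simp add: sum.distrib sum_subtractf)
  also have "\<dots> = 0" unfolding ta tb tc td te tf tg using tde by simp
  finally show ?thesis .
qed

end

theorem lemma6p4:
  fixes n :: nat and sX sO :: "nat \<Rightarrow> nat"
  assumes "knot_grid n sX sO"
  shows "maslov n sO (x_plus n sX) =
           real_of_int (- grid_writhe n sX sO - int (down_cusps n sX sO) + 1) \<and>
         maslov n sO (x_minus n sX) =
           real_of_int (- grid_writhe n sX sO - int (up_cusps n sX sO) + 1)"
proof -
  have G: "grid_diagram n sX sO" using assms unfolding knot_grid_def by simp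
  interpret gd n sX sO by unfold_locales (rule G)
  have m1: "maslov n sO (x_minus n sX) =
           real_of_int (- grid_writhe n sX sO - int (up_cusps n sX sO) + 1)"
  proof -
    have "(\<Sum>i<n. \<Sum>j<n.
      ind (i < j \<and> sX i < sX j) + ind (i < j \<and> sO i < sO j)
      - ind (i \<le> j \<and> sX i \<le> sO j) - ind (i < j \<and> sO i < sX j))
      + grid_writhe n sX sO + int (up_cusps n sX sO) = 0"
      using minus_core unfolding writhe_sum up_sum by (simp add: sum.distrib)
    then have eq: "1 + (\<Sum>i<n. \<Sum>j<n.
      ind (i < j \<and> sX i < sX j) + ind (i < j \<and> sO i < sO j)
      - ind (i \<le> j \<and> sX i \<le> sO j) - ind (i < j \<and> sO i < sX j))
      = - grid_writhe n sX sO - int (up_cusps n sX sO) + 1" by linarith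
    show ?thesis by (simp only: maslov_minus eq)
  qed
  have m2: "maslov n sO (x_plus n sX) =
           real_of_int (- grid_writhe n sX sO - int (down_cusps n sX sO) + 1)"
  proof -
    have pw: "ind ((i + 1) mod n < (j + 1) mod n \<and> (sX i + 1) mod n < (sX j + 1) mod n)
      + ind (i < j \<and> sO i < sO j)
      - ind ((i + 1) mod n \<le> j \<and> (sX i + 1) mod n \<le> sO j)
      - ind (i < (j + 1) mod n \<and> sO i < (sX j + 1) mod n)
    = (ind (i < j \<and> sX i < sX j) + ind (i < j \<and> sO i < sO j) - ind (i < j \<and> sX i < sO j) - ind (i \<le> j \<and> sO i \<le> sX j))
    + (ind (i = j \<and> Suc (sX i) = n) + ind (Suc i = n \<and> sX i < sX j) - ind (Suc i = n \<and> sX i < sO j)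
       - ind (Suc j = n \<and> sX i < sX j) + ind (Suc j = n \<and> sO i \<le> sX j)
       - ind (Suc i = n \<and> Suc (sX j) = n) - ind (Suc j = n \<and> Suc (sX i) = n))"
      if "i < n" "j < n" for i j
      by (rule pw_wrap) (use that sX_lt sO_lt in auto)
    have "(\<Sum>i<n. \<Sum>j<n.
      ind ((i + 1) mod n < (j + 1) mod n \<and> (sX i + 1) mod n < (sX j + 1) mod n)
      + ind (i < j \<and> sO i < sO j)
      - ind ((i + 1) mod n \<le> j \<and> (sX i + 1) mod n \<le> sO j)
      - ind (i < (j + 1) mod n \<and> sO i < (sX j + 1) mod n))
      = (\<Sum>i<n. \<Sum>j<n. (ind (i < j \<and> sX i < sX j) + ind (i < j \<and> sO i < sO j) - ind (i < j \<and> sX i < sO j) - ind (i \<le> j \<and> sO i \<le> sX j)))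
      + (\<Sum>i<n. \<Sum>j<n.
   ind (i = j \<and> Suc (sX i) = n) + ind (Suc i = n \<and> sX i < sX j) - ind (Suc i = n \<and> sX i < sO j)
   - ind (Suc j = n \<and> sX i < sX j) + ind (Suc j = n \<and> sO i \<le> sX j)
   - ind (Suc i = n \<and> Suc (sX j) = n) - ind (Suc j = n \<and> Suc (sX i) = n))"
      unfolding sum.distrib[symmetric] by (intro sum.cong refl, rule pw) auto
    also have "\<dots> = (\<Sum>i<n. \<Sum>j<n. (ind (i < j \<and> sX i < sX j) + ind (i < j \<and> sO i < sO j) - ind (i < j \<and> sX i < sO j) - ind (i \<le> j \<and> sO i \<le> sX j)))"
      using wrap_sum by simp
    finally have e: "(\<Sum>i<n. \<Sum>j<n.
      ind ((i + 1) mod n < (j + 1) mod n \<and> (sX i + 1) mod n < (sX j + 1) mod n)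
      + ind (i < j \<and> sO i < sO j)
      - ind ((i + 1) mod n \<le> j \<and> (sX i + 1) mod n \<le> sO j)
      - ind (i < (j + 1) mod n \<and> sO i < (sX j + 1) mod n))
      = (\<Sum>i<n. \<Sum>j<n. (ind (i < j \<and> sX i < sX j) + ind (i < j \<and> sO i < sO j) - ind (i < j \<and> sX i < sO j) - ind (i \<le> j \<and> sO i \<le> sX j)))" .
    have "(\<Sum>i<n. \<Sum>j<n. (ind (i < j \<and> sX i < sX j) + ind (i < j \<and> sO i < sO j) - ind (i < j \<and> sX i < sO j) - ind (i \<le> j \<and> sO i \<le> sX j)))
      + grid_writhe n sX sO + int (down_cusps n sX sO) = 0"
      using plus_core unfolding writhe_sum down_sum by (simp add: sum.distrib)
    then have eq: "1 + (\<Sum>i<n. \<Sum>j<n.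
      ind ((i + 1) mod n < (j + 1) mod n \<and> (sX i + 1) mod n < (sX j + 1) mod n)
      + ind (i < j \<and> sO i < sO j)
      - ind ((i + 1) mod n \<le> j \<and> (sX i + 1) mod n \<le> sO j)
      - ind (i < (j + 1) mod n \<and> sO i < (sX j + 1) mod n))
      = - grid_writhe n sX sO - int (down_cusps n sX sO) + 1" unfolding e by linarith
    show ?thesis by (simp only: maslov_plus eq)
  qed
  show ?thesis using m1 m2 by simp
qed

end
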